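(* Let $f$ satisfy Assumption A, $g$ satisfy Assumption B, $L>L_f$, and let $(u_k)$ be a sequence of proximal gradient iterates with parameter $L$ having a weak sequential limit point $u^*\in L^2(\Omega)$. Assume that the whole sequence satisfies $\nabla f(u_k)(x)\to\nabla f(u^* )(x)$ for almost all $x\in\Omega$. Then $u^*(x)\in\mathcal{G}_L(-\nabla f(u^* )(x))$ for almost all $x\in\Omega$.
   Context: $\Omega\subset\mathbb{R}^n$ Lebesgue measurable with finite measure. Assumption A: $f:L^2(\Omega)\to\mathbb{R}$ bounded below, weakly lower semicontinuous, Fréchet differentiable, $\nabla f$ Lipschitz with constant $L_f$. Assumption B on $g:\mathbb{R}\to\mathbb{R}\cup\{+\infty\}$: (B1) lsc, symmetric, $g(0)=0$; (B2) $g(u)<\infty$ for some $u\ne0$; (B3) one of (B3a) $g$ twice differentiable on some $(0,\epsilon)$, $\limsup_{u\searrow0}g''(u)\in(-\infty,0)$; (B3b) same differentiability, $\lim_{u\searrow0}g''(u)=-\infty$; (B3c) $\liminf_{u\searrow0}g(u)>0$; (B4) $g\ge0$. Proximal gradient iterates with parameter $L>0$: $(u_k)_{k\ge0}\subset L^2(\Omega)$, arbitrary $u_0$, each $u_{k+1}$ a global minimizer over $L^2(\Omega)$ of $f(u_k)+\int_\Omega\nabla f(u_k)(u-u_k)\,dx+\frac L2\|u-u_k\|^2_{L^2(\Omega)}+\int_\Omega g(u(x))\,dx$. $\mathcal{G}_L:\mathbb{R}\rightrightarrows\mathbb{R}$: $u\in\mathcal{G}_L(z)$ iff $u$ is a global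 minimizer of $v\mapsto -zv+\frac L2(v-u)^2+g(v)$ over $v\in\mathbb{R}$. *)

theory Defs
  imports "HOL-Analysis.Analysis"
begin

text \<open>L^2(Omega) is modelled by square-integrable Lebesgue measurable real functions
  on Omega (representatives); the measure space is Lebesgue measure restricted to Omega.\<close>

definition L2 :: "'a::euclidean_space set \<Rightarrow> ('a \<Rightarrow> real) set" where
  "L2 \<Omega> = {u. u \<in> borel_measurable (lebesgue_on \<Omega>) \<and>
                 integrable (lebesgue_on \<Omega>) (\<lambda>x. (u x)\<^sup>2)}"

definition l2_inner :: "'a::euclidean_space set \<Rightarrow> ('a \<Rightarrow> real) \<Rightarrow> ('a \<Rightarrow> real) \<Rightarrow> real" where
  "l2_inner \<Omega> u v = (\<integral>x. u x * v x \<partial>lebesgue_on \<Omega>)"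

definition l2_norm :: "'a::euclidean_space set \<Rightarrow> ('a \<Rightarrow> real) \<Rightarrow> real" where
  "l2_norm \<Omega> u = sqrt (\<integral>x. (u x)\<^sup>2 \<partial>lebesgue_on \<Omega>)"

definition weak_conv :: "'a::euclidean_space set \<Rightarrow> (nat \<Rightarrow> 'a \<Rightarrow> real) \<Rightarrow> ('a \<Rightarrow> real) \<Rightarrow> bool" where
  "weak_conv \<Omega> w u \<longleftrightarrow>
     (\<forall>v\<in>L2 \<Omega>. ((\<lambda>k. l2_inner \<Omega> (w k) v) \<longlongrightarrow> l2_inner \<Omega> u v) sequentially)"

definition weakly_lsc :: "'a::euclidean_space set \<Rightarrow> (('a \<Rightarrow> real) \<Rightarrow> real) \<Rightarrow> bool" where
  "weakly_lsc \<Omega> f \<longleftrightarrow>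
     (\<forall>w u. (\<forall>k. w k \<in> L2 \<Omega>) \<longrightarrow> u \<in> L2 \<Omega> \<longrightarrow> weak_conv \<Omega> w u \<longrightarrow>
        ereal (f u) \<le> liminf (\<lambda>k. ereal (f (w k))))"

definition frechet_gradient :: "'a::euclidean_space set \<Rightarrow> (('a \<Rightarrow> real) \<Rightarrow> real)
      \<Rightarrow> (('a \<Rightarrow> real) \<Rightarrow> ('a \<Rightarrow> real)) \<Rightarrow> bool" where
  "frechet_gradient \<Omega> f df \<longleftrightarrow>
     (\<forall>u\<in>L2 \<Omega>. df u \<in> L2 \<Omega> \<and>
        (\<forall>\<epsilon>>0. \<exists>\<delta>>0. \<forall>v\<in>L2 \<Omega>. l2_norm \<Omega> (\<lambda>x. v x - u x) < \<delta> \<longrightarrow>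
            \<bar>f v - f u - l2_inner \<Omega> (df u) (\<lambda>x. v x - u x)\<bar>
              \<le> \<epsilon> * l2_norm \<Omega> (\<lambda>x. v x - u x)))"

definition assumption_A :: "'a::euclidean_space set \<Rightarrow> (('a \<Rightarrow> real) \<Rightarrow> real)
      \<Rightarrow> (('a \<Rightarrow> real) \<Rightarrow> ('a \<Rightarrow> real)) \<Rightarrow> real \<Rightarrow> bool" where
  "assumption_A \<Omega> f df Lf \<longleftrightarrow>
     (\<exists>c. \<forall>u\<in>L2 \<Omega>. c \<le> f u) \<and>
     weakly_lsc \<Omega> f \<and>
     frechet_gradient \<Omega> f df \<and>
     0 \<le> Lf \<and>
     (\<forall>u\<in>L2 \<Omega>. \<forall>v\<in>L2 \<Omega>.
        l2_norm \<Omega> (\<lambda>x. df u x - df v x) \<le> Lf * l2_norm \<Omega> (\<lambda>x. u x - v x))"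

definition lsc_ereal :: "(real \<Rightarrow> ereal) \<Rightarrow> bool" where
  "lsc_ereal g \<longleftrightarrow> (\<forall>x. g x \<le> Liminf (at x) g)"

definition twice_diff_near0 :: "(real \<Rightarrow> ereal) \<Rightarrow> real \<Rightarrow> (real \<Rightarrow> real) \<Rightarrow> bool" where
  "twice_diff_near0 g \<epsilon> g2 \<longleftrightarrow> 0 < \<epsilon> \<and>
     (\<forall>x\<in>{0<..<\<epsilon>}. \<bar>g x\<bar> \<noteq> \<infinity>) \<and>
     (\<exists>g1. \<forall>x\<in>{0<..<\<epsilon>}.
        ((\<lambda>y. real_of_ereal (g y)) has_real_derivative g1 x) (at x) \<and>
        (g1 has_real_derivative g2 x) (at x))"

definition assumption_B :: "(real \<Rightarrow> ereal) \<Rightarrow> bool" where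
  "assumption_B g \<longleftrightarrow>
     \<comment> \<open>(B1)\<close>
     lsc_ereal g \<and> (\<forall>u. g (- u) = g u) \<and> g 0 = 0 \<and>
     \<comment> \<open>(B2)\<close>
     (\<exists>u. u \<noteq> 0 \<and> g u < \<infinity>) \<and>
     \<comment> \<open>(B3)\<close>
     ((\<exists>\<epsilon> g2. twice_diff_near0 g \<epsilon> g2 \<and>
          - \<infinity> < Limsup (at_right 0) (\<lambda>x. ereal (g2 x)) \<and> Limsup (at_right 0) (\<lambda>x. ereal (g2 x)) < 0)
      \<or> (\<exists>\<epsilon> g2. twice_diff_near0 g \<epsilon> g2 \<and> filterlim g2 at_bot (at_right 0))
      \<or> Liminf (at_right 0) g > 0) \<and>
     \<comment> \<open>(B4)\<close>
     (\<forall>u. 0 \<le> g u)"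

text \<open>Integral functional G(u) = int_Omega g(u(x)) dx (g is nonnegative).\<close>
definition G_int :: "'a::euclidean_space set \<Rightarrow> (real \<Rightarrow> ereal) \<Rightarrow> ('a \<Rightarrow> real) \<Rightarrow> ereal" where
  "G_int \<Omega> g u = enn2ereal (\<integral>\<^sup>+ x. e2ennreal (g (u x)) \<partial>lebesgue_on \<Omega>)"

definition prox_grad_iterates :: "'a::euclidean_space set \<Rightarrow> (('a \<Rightarrow> real) \<Rightarrow> real)
      \<Rightarrow> (('a \<Rightarrow> real) \<Rightarrow> ('a \<Rightarrow> real)) \<Rightarrow> (real \<Rightarrow> ereal) \<Rightarrow> real
      \<Rightarrow> (nat \<Rightarrow> 'a \<Rightarrow> real) \<Rightarrow> bool" where
  "prox_grad_iterates \<Omega> f df g L u \<longleftrightarrow>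
     (\<forall>k. u k \<in> L2 \<Omega>) \<and>
     (\<forall>k. \<forall>v\<in>L2 \<Omega>.
        ereal (f (u k) + l2_inner \<Omega> (df (u k)) (\<lambda>x. u (Suc k) x - u k x)
               + L / 2 * (l2_norm \<Omega> (\<lambda>x. u (Suc k) x - u k x))\<^sup>2) + G_int \<Omega> g (u (Suc k))
        \<le> ereal (f (u k) + l2_inner \<Omega> (df (u k)) (\<lambda>x. v x - u k x)
               + L / 2 * (l2_norm \<Omega> (\<lambda>x. v x - u k x))\<^sup>2) + G_int \<Omega> g v)"

definition G_L :: "(real \<Rightarrow> ereal) \<Rightarrow> real \<Rightarrow> real \<Rightarrow> real set" where
  "G_L g L z = {u. \<forall>v. ereal (- z * u + L / 2 * (u - u)\<^sup>2) + g u
                        \<le> ereal (- z * v + L / 2 * (v - u)\<^sup>2) + g v}"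

end

theory Submission
  imports Defs
begin


lemma L2_meas: "u \<in> L2 \<Omega> \<Longrightarrow> u \<in> borel_measurable (lebesgue_on \<Omega>)"
  by (simp add: L2_def)
lemma L2_sq_int: "u \<in> L2 \<Omega> \<Longrightarrow> integrable (lebesgue_on \<Omega>) (\<lambda>x. (u x)\<^sup>2)"
  by (simp add: L2_def)

lemma L2_mult_int:
  assumes "u \<in> L2 \<Omega>" "v \<in> L2 \<Omega>"
  shows "integrable (lebesgue_on \<Omega>) (\<lambda>x. u x * v x)"
proof (rule Bochner_Integration.integrable_bound)
  show "integrable (lebesgue_on \<Omega>) (\<lambda>x. (u x)\<^sup>2 + (v x)\<^sup>2)"
    using assms by (simp add: L2_sq_int)
  show "(\<lambda>x. u x * v x) \<in> borel_measurable (lebesgue_on \<Omega>)"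
    using assms by (simp add: L2_meas borel_measurable_times)
  show "AE x in lebesgue_on \<Omega>. norm (u x * v x) \<le> norm ((u x)\<^sup>2 + (v x)\<^sup>2)"
  proof (rule AE_I2)
    fix x
    have "\<bar>u x * v x\<bar> \<le> (u x)\<^sup>2 + (v x)\<^sup>2"
    proof -
      have "0 \<le> (\<bar>u x\<bar> - \<bar>v x\<bar>)\<^sup>2" by simp
      then have "2 * (\<bar>u x\<bar> * \<bar>v x\<bar>) \<le> (u x)\<^sup>2 + (v x)\<^sup>2" by (simp add: power2_diff)
      moreover have "0 \<le> \<bar>u x\<bar> * \<bar>v x\<bar>" by simp
      moreover have "\<bar>u x * v x\<bar> = \<bar>u x\<bar> * \<bar>v x\<bar>" by (simp add: abs_mult)
      ultimately show ?thesis by linarith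
    qed
    then show "norm (u x * v x) \<le> norm ((u x)\<^sup>2 + (v x)\<^sup>2)" by simp
  qed
qed

lemma L2_lin:
  assumes "u \<in> L2 \<Omega>" "v \<in> L2 \<Omega>"
  shows "(\<lambda>x. a * u x + b * v x) \<in> L2 \<Omega>"
proof -
  have "(\<lambda>x. (a * u x + b * v x)\<^sup>2) = (\<lambda>x. a\<^sup>2 * (u x)\<^sup>2 + 2*a*b * (u x * v x) + b\<^sup>2 * (v x)\<^sup>2)"
    by (auto simp: power2_eq_square algebra_simps)
  moreover have "integrable (lebesgue_on \<Omega>) \<dots>"
    using assms L2_mult_int[OF assms] by (intro Bochner_Integration.integrable_add integrable_mult_right) (auto simp: L2_sq_int)
  ultimately show ?thesis using assms by (auto simp: L2_def)
qed

lemma L2_diff: "u \<in> L2 \<Omega> \<Longrightarrow> v \<in> L2 \<Omega> \<Longrightarrow> (\<lambda>x. u x - v x) \<in> L2 \<Omega>"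
  using L2_lin[of u \<Omega> v 1 "-1"] by simp
lemma L2_add: "u \<in> L2 \<Omega> \<Longrightarrow> v \<in> L2 \<Omega> \<Longrightarrow> (\<lambda>x. u x + v x) \<in> L2 \<Omega>"
  using L2_lin[of u \<Omega> v 1 1] by simp
lemma L2_scale: "u \<in> L2 \<Omega> \<Longrightarrow> (\<lambda>x. a * u x) \<in> L2 \<Omega>"
  using L2_lin[of u \<Omega> u a 0] by simp
lemma L2_zero: "(\<lambda>x. 0) \<in> L2 \<Omega>"
  by (simp add: L2_def)

lemma l2_norm_sq: "(l2_norm \<Omega> u)\<^sup>2 = (\<integral>x. (u x)\<^sup>2 \<partial>lebesgue_on \<Omega>)"
  unfolding l2_norm_def by (simp add: integral_nonneg_AE)

lemma l2_norm_nonneg: "0 \<le> l2_norm \<Omega> u" by (simp add: l2_norm_def integral_nonneg_AE)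

lemma l2_CS:
  assumes "u \<in> L2 \<Omega>" "v \<in> L2 \<Omega>"
  shows "\<bar>l2_inner \<Omega> u v\<bar> \<le> l2_norm \<Omega> u * l2_norm \<Omega> v"
proof -
  define P where "P = (\<integral>x. (u x)\<^sup>2 \<partial>lebesgue_on \<Omega>)"
  define Q where "Q = (\<integral>x. (v x)\<^sup>2 \<partial>lebesgue_on \<Omega>)"
  define I where "I = l2_inner \<Omega> u v"
  have P0: "0 \<le> P" "0 \<le> Q" unfolding P_def Q_def by (auto intro: integral_nonneg_AE)
  have key: "\<bar>I\<bar> \<le> (lam * P + Q / lam) / 2" if "lam > 0" for lam
  proof -
    have "\<bar>I\<bar> \<le> (\<integral>x. \<bar>u x * v x\<bar> \<partial>lebesgue_on \<Omega>)"
      unfolding I_def l2_inner_def using integral_abs_bound[of "lebesgue_on \<Omega>" "\<lambda>x. u x * v x"] by simp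
    also have "\<dots> \<le> (\<integral>x. (lam * (u x)\<^sup>2 + (v x)\<^sup>2 / lam) / 2 \<partial>lebesgue_on \<Omega>)"
    proof (rule integral_mono)
      show "integrable (lebesgue_on \<Omega>) (\<lambda>x. \<bar>u x * v x\<bar>)"
        using L2_mult_int[OF assms] by auto
      show "integrable (lebesgue_on \<Omega>) (\<lambda>x. (lam * (u x)\<^sup>2 + (v x)\<^sup>2 / lam) / 2)"
        using assms by (auto simp: L2_sq_int)
      fix x
      define s where "s = sqrt lam"
      have s: "s > 0" "s * s = lam" using that unfolding s_def by (auto simp: real_sqrt_mult[symmetric])
      have "0 \<le> (s * \<bar>u x\<bar> - \<bar>v x\<bar> / s)\<^sup>2" by simp
      also have "\<dots> = (s * s) * (u x)\<^sup>2 + (v x)\<^sup>2 / (s * s) - 2 * \<bar>u x * v x\<bar>"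
        using s(1) by (simp add: power2_eq_square field_simps abs_mult)
      also have "\<dots> = lam * (u x)\<^sup>2 + (v x)\<^sup>2 / lam - 2 * \<bar>u x * v x\<bar>" using s by simp
      finally show "\<bar>u x * v x\<bar> \<le> (lam * (u x)\<^sup>2 + (v x)\<^sup>2 / lam) / 2" by simp
    qed
    also have "\<dots> = (lam * P + Q / lam) / 2"
      unfolding P_def Q_def using assms
      by (simp add: L2_sq_int integral_divide_zero)
    finally show ?thesis .
  qed
  have goal: "\<bar>I\<bar> \<le> sqrt P * sqrt Q"
  proof (cases "P > 0 \<and> Q > 0")
    case True
    have "\<bar>I\<bar> \<le> ((sqrt Q / sqrt P) * P + Q / (sqrt Q / sqrt P)) / 2"
      using True by (intro key) auto
    also have "\<dots> = sqrt P * sqrt Q"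
    proof -
      have a: "sqrt P * sqrt P = P" "sqrt Q * sqrt Q = Q" using P0 by auto
      have "(sqrt Q / sqrt P) * P = sqrt Q * sqrt P" using True a(1) by (metis nonzero_mult_div_cancel_left real_sqrt_gt_zero less_irrefl times_divide_eq_left mult.commute)
      moreover have "Q / (sqrt Q / sqrt P) = sqrt Q * sqrt P" using True a(2)
        by (metis divide_divide_eq_right nonzero_mult_div_cancel_left order_less_irrefl real_sqrt_gt_zero)
      ultimately show ?thesis by simp
    qed
    finally show ?thesis .
  next
    case False
    then have "P = 0 \<or> Q = 0" using P0 by auto
    have "\<bar>I\<bar> \<le> 0"
    proof (rule ccontr)
      assume n: "\<not> \<bar>I\<bar> \<le> 0"
      then have Ip: "\<bar>I\<bar> > 0" by simp
      show False
      proof (cases "P = 0")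
        case True
        have "\<bar>I\<bar> \<le> ((Q+1) / \<bar>I\<bar> * P + Q / ((Q+1) / \<bar>I\<bar>)) / 2"
          using Ip P0 by (intro key) auto
        also have "\<dots> = Q * \<bar>I\<bar> / (2*(Q+1))" using True Ip P0 by (simp add: field_simps)
        also have "\<dots> < \<bar>I\<bar>"
        proof -
          have "0 \<le> Q * \<bar>I\<bar>" using P0 by simp
          then have "Q * \<bar>I\<bar> < \<bar>I\<bar> * (2*(Q+1))" using Ip by (simp add: algebra_simps)
          then show ?thesis using P0 by (subst pos_divide_less_eq) auto
        qed
        finally show False by simp
      next
        case False
        then have Q: "Q = 0" using \<open>P = 0 \<or> Q = 0\<close> by auto
        have "\<bar>I\<bar> \<le> (\<bar>I\<bar> / (P+1) * P + Q / (\<bar>I\<bar> / (P+1))) / 2"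
          using Ip P0 by (intro key) auto
        also have "\<dots> = P * \<bar>I\<bar> / (2*(P+1))" using Q Ip P0 by (simp add: field_simps)
        also have "\<dots> < \<bar>I\<bar>"
        proof -
          have "0 \<le> P * \<bar>I\<bar>" using P0 by simp
          then have "P * \<bar>I\<bar> < \<bar>I\<bar> * (2*(P+1))" using Ip by (simp add: algebra_simps)
          then show ?thesis using P0 by (subst pos_divide_less_eq) auto
        qed
        finally show False by simp
      qed
    qed
    moreover have "0 \<le> sqrt P * sqrt Q" using P0 by simp
    ultimately show ?thesis by linarith
  qed
  then show ?thesis unfolding I_def P_def Q_def l2_norm_def .
qed



lemma l2_inner_scale_right: "l2_inner \<Omega> a (\<lambda>x. c * b x) = c * l2_inner \<Omega> a b"
  unfolding l2_inner_def by (simp add: mult.left_commute)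

lemma l2_norm_scale: "l2_norm \<Omega> (\<lambda>x. c * b x) = \<bar>c\<bar> * l2_norm \<Omega> b"
  unfolding l2_norm_def by (simp add: power_mult_distrib real_sqrt_mult)

lemma l2_inner_diff_left:
  assumes "a \<in> L2 \<Omega>" "b \<in> L2 \<Omega>" "h \<in> L2 \<Omega>"
  shows "l2_inner \<Omega> a h - l2_inner \<Omega> b h = l2_inner \<Omega> (\<lambda>x. a x - b x) h"
  unfolding l2_inner_def using L2_mult_int[OF assms(1,3)] L2_mult_int[OF assms(2,3)]
  by (simp add: left_diff_distrib)

lemma descent:
  assumes fg: "frechet_gradient \<Omega> f df"
    and lip: "\<forall>u\<in>L2 \<Omega>. \<forall>v\<in>L2 \<Omega>. l2_norm \<Omega> (\<lambda>x. df u x - df v x) \<le> Lf * l2_norm \<Omega> (\<lambda>x. u x - v x)"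
    and u: "u \<in> L2 \<Omega>" and v: "v \<in> L2 \<Omega>"
  shows "f v \<le> f u + l2_inner \<Omega> (df u) (\<lambda>x. v x - u x) + Lf / 2 * (l2_norm \<Omega> (\<lambda>x. v x - u x))\<^sup>2"
proof -
  define h where "h = (\<lambda>x. v x - u x)"
  have h: "h \<in> L2 \<Omega>" unfolding h_def using v u by (rule L2_diff)
  define p where "p = (\<lambda>t x. u x + t * h x)"
  have p: "p t \<in> L2 \<Omega>" for t unfolding p_def using L2_lin[OF u h, of 1 t] by simp
  define N where "N = l2_norm \<Omega> h"
  have N0: "0 \<le> N" unfolding N_def by (rule l2_norm_nonneg)
  define D where "D = (\<lambda>t. l2_inner \<Omega> (df (p t)) h)"
  have pdiff: "(\<lambda>x. p s x - p t x) = (\<lambda>x. (s - t) * h x)" for s t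
    unfolding p_def by (auto simp: algebra_simps)
  have deriv: "((\<lambda>t. f (p t)) has_real_derivative D t) (at t)" for t
  proof -
    have "((\<lambda>y. (f (p y) - f (p t)) / (y - t)) \<longlongrightarrow> D t) (at t)"
    proof (rule LIM_I)
      fix e :: real assume e: "0 < e"
      define \<epsilon> where "\<epsilon> = e / (2 * (N + 1))"
      have \<epsilon>: "\<epsilon> > 0" unfolding \<epsilon>_def using e N0 by auto
      obtain \<delta> where \<delta>: "\<delta> > 0" and H: "\<And>w. w \<in> L2 \<Omega> \<Longrightarrow> l2_norm \<Omega> (\<lambda>x. w x - p t x) < \<delta> \<Longrightarrow>
          \<bar>f w - f (p t) - l2_inner \<Omega> (df (p t)) (\<lambda>x. w x - p t x)\<bar> \<le> \<epsilon> * l2_norm \<Omega> (\<lambda>x. w x - p t x)"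
        using fg p[of t] \<epsilon> unfolding frechet_gradient_def by metis
      show "\<exists>r>0. \<forall>y. y \<noteq> t \<and> norm (y - t) < r \<longrightarrow> norm ((f (p y) - f (p t)) / (y - t) - D t) < e"
      proof (intro exI[of _ "\<delta> / (N + 1)"] conjI allI impI)
        show "0 < \<delta> / (N + 1)" using \<delta> N0 by simp
        fix y assume y: "y \<noteq> t \<and> norm (y - t) < \<delta> / (N + 1)"
        have nrm: "l2_norm \<Omega> (\<lambda>x. p y x - p t x) = \<bar>y - t\<bar> * N"
          unfolding pdiff N_def by (rule l2_norm_scale)
        have inr: "l2_inner \<Omega> (df (p t)) (\<lambda>x. p y x - p t x) = (y - t) * D t"
          unfolding pdiff D_def by (rule l2_inner_scale_right)
        have "\<bar>y - t\<bar> * N \<le> \<bar>y - t\<bar> * (N + 1)" using N0 by (simp add: mult_left_mono)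
        also have "\<dots> < \<delta>" using y N0 by (simp add: pos_less_divide_eq)
        finally have "l2_norm \<Omega> (\<lambda>x. p y x - p t x) < \<delta>" using nrm by simp
        from H[OF p this] nrm inr
        have "\<bar>f (p y) - f (p t) - (y - t) * D t\<bar> \<le> \<epsilon> * (\<bar>y - t\<bar> * N)" by simp
        then have "\<bar>(f (p y) - f (p t)) / (y - t) - D t\<bar> \<le> \<epsilon> * N"
          using y by (simp add: divide_le_eq field_simps abs_divide abs_mult)
        also have "\<dots> < e"
        proof -
          have "\<epsilon> * N \<le> \<epsilon> * (N + 1)" using \<epsilon> by simp
          also have "\<dots> = e / 2" unfolding \<epsilon>_def using N0 by (simp add: field_simps)
          finally show ?thesis using e by simp
        qed
        finally show "norm ((f (p y) - f (p t)) / (y - t) - D t) < e" by simp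
      qed
    qed
    then show ?thesis by (simp add: has_field_derivative_iff)
  qed
  define \<psi> where "\<psi> = (\<lambda>t. f (p t) - t * D 0 - Lf * N\<^sup>2 / 2 * t\<^sup>2)"
  have "\<psi> 0 \<ge> \<psi> 1"
  proof (rule DERIV_nonpos_imp_nonincreasing[of 0 1 \<psi>])
    fix t :: real assume t: "0 \<le> t" "t \<le> 1"
    have "(\<psi> has_real_derivative (D t - D 0 - Lf * N\<^sup>2 / 2 * (2 * t))) (at t)"
      unfolding \<psi>_def by (auto intro!: derivative_eq_intros deriv)
    moreover have "D t - D 0 \<le> Lf * N\<^sup>2 * t"
    proof -
      have "D t - D 0 = l2_inner \<Omega> (\<lambda>x. df (p t) x - df (p 0) x) h"
        unfolding D_def using fg p h unfolding frechet_gradient_def by (intro l2_inner_diff_left) auto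
      also have "\<dots> \<le> l2_norm \<Omega> (\<lambda>x. df (p t) x - df (p 0) x) * N"
      proof -
        have "(\<lambda>x. df (p t) x - df (p 0) x) \<in> L2 \<Omega>"
          using fg p unfolding frechet_gradient_def by (intro L2_diff) auto
        from l2_CS[OF this h] show ?thesis unfolding N_def by simp
      qed
      also have "\<dots> \<le> Lf * l2_norm \<Omega> (\<lambda>x. p t x - p 0 x) * N"
        using lip p N0 by (intro mult_right_mono) auto
      also have "\<dots> = Lf * N\<^sup>2 * t"
        unfolding pdiff l2_norm_scale N_def using t by (simp add: power2_eq_square)
      finally show ?thesis .
    qed
    ultimately show "\<exists>y. DERIV \<psi> t :> y \<and> y \<le> 0" by force
  qed simp
  moreover have "p 0 = u" "p 1 = v" unfolding p_def h_def by auto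
  ultimately show ?thesis unfolding \<psi>_def D_def N_def h_def by (simp add: algebra_simps)
qed



lemma lsc_open:
  assumes "lsc_ereal g" shows "open {x. y < g x}"
proof (subst open_subopen, intro ballI)
  fix x assume "x \<in> {x. y < g x}"
  then have "y < Liminf (at x) g" using assms unfolding lsc_ereal_def by (meson order_less_le_trans mem_Collect_eq)
  then have "eventually (\<lambda>z. y < g z) (at x)" by (rule less_LiminfD)
  then obtain S where S: "open S" "x \<in> S" "\<forall>z\<in>S. z \<noteq> x \<longrightarrow> y < g z"
    unfolding eventually_at_topological by blast
  show "\<exists>T. open T \<and> x \<in> T \<and> T \<subseteq> {x. y < g x}"
    using S \<open>x \<in> {x. y < g x}\<close> by (intro exI[of _ S]) auto
qed

lemma lsc_meas:
  assumes "lsc_ereal g" shows "g \<in> borel_measurable borel"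
  unfolding borel_measurable_ereal_iff_Ioi
proof
  fix a
  have "g -` {a<..} \<inter> space borel = {x. a < g x}" by auto
  then show "g -` {a<..} \<inter> space borel \<in> sets borel" using lsc_open[OF assms, of a] by simp
qed

lemma lsc_seq:
  assumes "lsc_ereal g" "b \<longlonglongrightarrow> p" "y < g p"
  shows "eventually (\<lambda>i. y < g (b i)) sequentially"
  using topological_tendstoD[OF assms(2) lsc_open[OF assms(1), of y]] assms(3) by simp

lemma G_int_nonneg: "0 \<le> G_int \<Omega> g v"
  unfolding G_int_def by simp

lemma G_int_real:
  assumes g0: "\<forall>t. 0 \<le> g t" and meas: "(\<lambda>x. g (v x)) \<in> borel_measurable (lebesgue_on \<Omega>)"
    and fin: "AE x in lebesgue_on \<Omega>. g (v x) \<noteq> \<infinity>"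
    and int: "integrable (lebesgue_on \<Omega>) (\<lambda>x. real_of_ereal (g (v x)))"
  shows "G_int \<Omega> g v = ereal (\<integral>x. real_of_ereal (g (v x)) \<partial>lebesgue_on \<Omega>)"
proof -
  have "(\<integral>\<^sup>+ x. e2ennreal (g (v x)) \<partial>lebesgue_on \<Omega>) = (\<integral>\<^sup>+ x. ennreal (real_of_ereal (g (v x))) \<partial>lebesgue_on \<Omega>)"
  proof (rule nn_integral_cong_AE)
    show "AE x in lebesgue_on \<Omega>. e2ennreal (g (v x)) = ennreal (real_of_ereal (g (v x)))"
      using fin
    proof eventually_elim
      case (elim x)
      have "g (v x) = ereal (real_of_ereal (g (v x)))" using elim g0[rule_format, of "v x"]
        by (cases "g (v x)") auto
      then show ?case by (metis e2ennreal_ereal)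
    qed
  qed
  also have "\<dots> = ennreal (\<integral>x. real_of_ereal (g (v x)) \<partial>lebesgue_on \<Omega>)"
    using int g0 by (intro nn_integral_eq_integral) (auto simp: real_of_ereal_pos)
  finally show ?thesis unfolding G_int_def
    using g0 by (simp add: integral_nonneg_AE real_of_ereal_pos)
qed

lemma G_int_fin:
  assumes g0: "\<forall>t. 0 \<le> g t" and meas: "(\<lambda>x. g (v x)) \<in> borel_measurable (lebesgue_on \<Omega>)"
    and G: "G_int \<Omega> g v \<noteq> \<infinity>"
  shows "AE x in lebesgue_on \<Omega>. g (v x) \<noteq> \<infinity>"
    and "integrable (lebesgue_on \<Omega>) (\<lambda>x. real_of_ereal (g (v x)))"
proof -
  have m2: "(\<lambda>x. e2ennreal (g (v x))) \<in> borel_measurable (lebesgue_on \<Omega>)"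
    using meas by (rule measurable_compose[OF _ measurable_e2ennreal])
  have N: "(\<integral>\<^sup>+ x. e2ennreal (g (v x)) \<partial>lebesgue_on \<Omega>) \<noteq> \<infinity>"
    using G unfolding G_int_def by simp
  have AE1: "AE x in lebesgue_on \<Omega>. e2ennreal (g (v x)) \<noteq> \<infinity>"
    using nn_integral_PInf_AE[OF m2 N] .
  show AE2: "AE x in lebesgue_on \<Omega>. g (v x) \<noteq> \<infinity>"
    using AE1 by eventually_elim auto
  have eq: "(\<integral>\<^sup>+ x. e2ennreal (g (v x)) \<partial>lebesgue_on \<Omega>) = (\<integral>\<^sup>+ x. ennreal (real_of_ereal (g (v x))) \<partial>lebesgue_on \<Omega>)"
  proof (rule nn_integral_cong_AE)
    show "AE x in lebesgue_on \<Omega>. e2ennreal (g (v x)) = ennreal (real_of_ereal (g (v x)))"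
      using AE2
    proof eventually_elim
      case (elim x)
      have "g (v x) = ereal (real_of_ereal (g (v x)))" using elim g0[rule_format, of "v x"]
        by (cases "g (v x)") auto
      then show ?case by (metis e2ennreal_ereal)
    qed
  qed
  show "integrable (lebesgue_on \<Omega>) (\<lambda>x. real_of_ereal (g (v x)))"
  proof (rule integrableI_bounded)
    show "(\<lambda>x. real_of_ereal (g (v x))) \<in> borel_measurable (lebesgue_on \<Omega>)"
      using borel_measurable_real_of_ereal[OF meas] .
    have E1: "(\<integral>\<^sup>+ x. ennreal (norm (real_of_ereal (g (v x)))) \<partial>lebesgue_on \<Omega>) = (\<integral>\<^sup>+ x. ennreal (real_of_ereal (g (v x))) \<partial>lebesgue_on \<Omega>)"
      using g0 by (intro nn_integral_cong) (auto simp: real_of_ereal_pos)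
    have "(\<integral>\<^sup>+ x. ennreal (real_of_ereal (g (v x))) \<partial>lebesgue_on \<Omega>) \<noteq> \<infinity>"
      using N unfolding eq .
    then show "(\<integral>\<^sup>+ x. ennreal (norm (real_of_ereal (g (v x)))) \<partial>lebesgue_on \<Omega>) < \<infinity>"
      unfolding E1 by (simp add: top.not_eq_extremum)
  qed
qed



lemma G_int_zero: "g 0 = 0 \<Longrightarrow> G_int \<Omega> g (\<lambda>x. 0) = 0"
proof -
  assume "g 0 = 0"
  moreover have "e2ennreal 0 = 0" by (rule e2ennreal_neg) simp
  ultimately show ?thesis unfolding G_int_def by (simp add: zero_ennreal.rep_eq)
qed

lemma prox_ineq:
  assumes "prox_grad_iterates \<Omega> f df g L u" "v \<in> L2 \<Omega>"
  shows "ereal (f (u k) + l2_inner \<Omega> (df (u k)) (\<lambda>x. u (Suc k) x - u k x)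
               + L / 2 * (l2_norm \<Omega> (\<lambda>x. u (Suc k) x - u k x))\<^sup>2) + G_int \<Omega> g (u (Suc k))
        \<le> ereal (f (u k) + l2_inner \<Omega> (df (u k)) (\<lambda>x. v x - u k x)
               + L / 2 * (l2_norm \<Omega> (\<lambda>x. v x - u k x))\<^sup>2) + G_int \<Omega> g v"
proof -
  note H = assms(1)[unfolded prox_grad_iterates_def, THEN conjunct2]
  show ?thesis by (rule bspec[OF spec[OF H] assms(2)])
qed

lemma l2_inner_self_zero: "l2_inner \<Omega> a (\<lambda>x. w x - w x) = 0"
  unfolding l2_inner_def by simp
lemma l2_norm_self_zero: "l2_norm \<Omega> (\<lambda>x. w x - w x) = 0"
  unfolding l2_norm_def by simp

lemma iter_G_fin:
  assumes g0: "\<forall>t. 0 \<le> g t" and gz: "g 0 = 0"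
    and P: "prox_grad_iterates \<Omega> f df g L u"
  shows "G_int \<Omega> g (u (Suc k)) \<noteq> \<infinity>"
proof
  assume inf: "G_int \<Omega> g (u (Suc k)) = \<infinity>"
  have "ereal (f (u k) + l2_inner \<Omega> (df (u k)) (\<lambda>x. u (Suc k) x - u k x)
               + L / 2 * (l2_norm \<Omega> (\<lambda>x. u (Suc k) x - u k x))\<^sup>2) + G_int \<Omega> g (u (Suc k))
        \<le> ereal (f (u k) + l2_inner \<Omega> (df (u k)) (\<lambda>x. 0 - u k x)
               + L / 2 * (l2_norm \<Omega> (\<lambda>x. 0 - u k x))\<^sup>2) + G_int \<Omega> g (\<lambda>x. 0)"
    by (rule prox_ineq[OF P L2_zero])
  then show False using inf G_int_zero[of g \<Omega>, OF gz] by simp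
qed

lemma G_real:
  assumes "G_int \<Omega> g v \<noteq> \<infinity>"
  shows "G_int \<Omega> g v = ereal (real_of_ereal (G_int \<Omega> g v))"
  using assms G_int_nonneg[of \<Omega> g v] by (cases "G_int \<Omega> g v") auto

lemma iter_summable:
  assumes A: "assumption_A \<Omega> f df Lf" and g0: "\<forall>t. 0 \<le> g t" and gz: "g 0 = 0"
    and LL: "L > Lf" and P: "prox_grad_iterates \<Omega> f df g L u"
  shows "summable (\<lambda>k. (l2_norm \<Omega> (\<lambda>x. u (Suc k) x - u k x))\<^sup>2)"
proof -
  obtain c where c: "\<forall>v\<in>L2 \<Omega>. c \<le> f v" using A unfolding assumption_A_def by blast
  have fg: "frechet_gradient \<Omega> f df" and Lf0: "0 \<le> Lf"
    and lip: "\<forall>u\<in>L2 \<Omega>. \<forall>v\<in>L2 \<Omega>. l2_norm \<Omega> (\<lambda>x. df u x - df v x) \<le> Lf * l2_norm \<Omega> (\<lambda>x. u x - v x)"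
    using A unfolding assumption_A_def by auto
  have uL2: "u k \<in> L2 \<Omega>" for k using P unfolding prox_grad_iterates_def by blast
  define N where "N = (\<lambda>k. l2_norm \<Omega> (\<lambda>x. u (Suc k) x - u k x))"
  define I where "I = (\<lambda>k. l2_inner \<Omega> (df (u k)) (\<lambda>x. u (Suc k) x - u k x))"
  define Gr where "Gr = (\<lambda>k. real_of_ereal (G_int \<Omega> g (u k)))"
  define F where "F = (\<lambda>k. f (u k) + Gr k)"
  have Gr0: "0 \<le> Gr k" for k unfolding Gr_def using G_int_nonneg[of \<Omega> g "u k"]
    by (simp add: real_of_ereal_pos)
  have Geq: "G_int \<Omega> g (u (Suc k)) = ereal (Gr (Suc k))" for k
    unfolding Gr_def by (rule G_real[OF iter_G_fin[OF g0 gz P]])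
  have dec: "F (Suc (Suc m)) + (L - Lf) / 2 * (N (Suc m))\<^sup>2 \<le> F (Suc m)" for m
  proof -
    define k where "k = Suc m"
    have "ereal (f (u k) + I k + L / 2 * (N k)\<^sup>2) + G_int \<Omega> g (u (Suc k))
        \<le> ereal (f (u k) + l2_inner \<Omega> (df (u k)) (\<lambda>x. u k x - u k x)
               + L / 2 * (l2_norm \<Omega> (\<lambda>x. u k x - u k x))\<^sup>2) + G_int \<Omega> g (u k)"
      unfolding I_def N_def by (rule prox_ineq[OF P uL2])
    then have "ereal (f (u k) + I k + L / 2 * (N k)\<^sup>2) + ereal (Gr (Suc k)) \<le> ereal (f (u k)) + ereal (Gr k)"
      unfolding l2_inner_self_zero l2_norm_self_zero k_def Geq by simp
    then have r: "f (u k) + I k + L / 2 * (N k)\<^sup>2 + Gr (Suc k) \<le> f (u k) + Gr k" by simp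
    have d: "f (u (Suc k)) \<le> f (u k) + I k + Lf / 2 * (N k)\<^sup>2"
      unfolding I_def N_def by (rule descent[OF fg lip uL2 uL2])
    have e: "(L - Lf) / 2 * (N k)\<^sup>2 = L / 2 * (N k)\<^sup>2 - Lf / 2 * (N k)\<^sup>2" by (simp add: left_diff_distrib diff_divide_distrib)
    from r d show ?thesis unfolding F_def k_def[symmetric] e by linarith
  qed
  have tel: "F (Suc n) + (L - Lf) / 2 * (\<Sum>i<n. (N (Suc i))\<^sup>2) \<le> F 1" for n
  proof (induction n)
    case 0 then show ?case by simp
  next
    case (Suc n)
    have "F (Suc (Suc n)) + (L - Lf) / 2 * (\<Sum>i<Suc n. (N (Suc i))\<^sup>2)
        = F (Suc (Suc n)) + (L - Lf) / 2 * (N (Suc n))\<^sup>2 + (L - Lf) / 2 * (\<Sum>i<n. (N (Suc i))\<^sup>2)"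
      by (simp add: algebra_simps)
    also have "\<dots> \<le> F (Suc n) + (L - Lf) / 2 * (\<Sum>i<n. (N (Suc i))\<^sup>2)" using dec[of n] by simp
    also have "\<dots> \<le> F 1" using Suc .
    finally show ?case .
  qed
  have Fc: "c \<le> F k" for k unfolding F_def using c uL2[of k] Gr0[of k] by force
  have "summable (\<lambda>i. (N (Suc i))\<^sup>2)"
  proof (rule summableI_nonneg_bounded)
    fix n
    have "(L - Lf) / 2 * (\<Sum>i<n. (N (Suc i))\<^sup>2) \<le> F 1 - c" using tel[of n] Fc[of "Suc n"] by simp
    then show "(\<Sum>i<n. (N (Suc i))\<^sup>2) \<le> 2 * (F 1 - c) / (L - Lf)"
      using LL by (simp add: field_simps)
  qed simp
  then have "summable (\<lambda>k. (N k)\<^sup>2)" using summable_Suc_iff[of "\<lambda>k. (N k)\<^sup>2"] by simp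
  then show ?thesis unfolding N_def .
qed

lemma AE_steps_zero:
  assumes D: "\<And>k. D k \<in> L2 \<Omega>" and S: "summable (\<lambda>k. (l2_norm \<Omega> (D k))\<^sup>2)"
  shows "AE x in lebesgue_on \<Omega>. (\<lambda>k. D k x) \<longlonglongrightarrow> 0"
proof -
  have meas: "(\<lambda>x. \<Sum>k. ennreal ((D k x)\<^sup>2)) \<in> borel_measurable (lebesgue_on \<Omega>)"
  proof -
    have [measurable]: "D k \<in> borel_measurable (lebesgue_on \<Omega>)" for k using D[of k] by (simp add: L2_def)
    show ?thesis by measurable
  qed
  have "(\<integral>\<^sup>+ x. (\<Sum>k. ennreal ((D k x)\<^sup>2)) \<partial>lebesgue_on \<Omega>) = (\<Sum>k. \<integral>\<^sup>+ x. ennreal ((D k x)\<^sup>2) \<partial>lebesgue_on \<Omega>)"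
    using D by (intro nn_integral_suminf) (auto simp: L2_def)
  also have "\<dots> = (\<Sum>k. ennreal ((l2_norm \<Omega> (D k))\<^sup>2))"
  proof -
    have "(\<integral>\<^sup>+ x. ennreal ((D k x)\<^sup>2) \<partial>lebesgue_on \<Omega>) = ennreal ((l2_norm \<Omega> (D k))\<^sup>2)" for k
      unfolding l2_norm_sq using D[of k] by (intro nn_integral_eq_integral) (auto simp: L2_def)
    then show ?thesis by simp
  qed
  also have "\<dots> \<noteq> \<infinity>" unfolding infinity_ennreal_def by (rule ennreal_suminf_neq_top[OF S zero_le_power2])
  finally have "AE x in lebesgue_on \<Omega>. (\<Sum>k. ennreal ((D k x)\<^sup>2)) \<noteq> \<infinity>"
    by (rule nn_integral_PInf_AE[OF meas])
  then show ?thesis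
  proof eventually_elim
    case (elim x)
    have "summable (\<lambda>k. (D k x)\<^sup>2)" using elim by (intro summable_suminf_not_top) auto
    then have "(\<lambda>k. (D k x)\<^sup>2) \<longlonglongrightarrow> 0" by (rule summable_LIMSEQ_zero)
    then have "(\<lambda>k. sqrt ((D k x)\<^sup>2)) \<longlonglongrightarrow> sqrt 0" by (rule tendsto_real_sqrt)
    then have "(\<lambda>k. \<bar>D k x\<bar>) \<longlonglongrightarrow> 0" by simp
    then show ?case by (rule tendsto_rabs_zero_cancel)
  qed
qed



lemma fm_lebesgue_on:
  assumes "\<Omega> \<in> sets lebesgue" "emeasure lebesgue \<Omega> < \<infinity>"
  shows "finite_measure (lebesgue_on \<Omega>)"
proof
  have "emeasure (lebesgue_on \<Omega>) (space (lebesgue_on \<Omega>)) = emeasure lebesgue \<Omega>"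
    using assms by (simp add: emeasure_restrict_space)
  then show "emeasure (lebesgue_on \<Omega>) (space (lebesgue_on \<Omega>)) \<noteq> \<infinity>" using assms by simp
qed

lemma L2_const:
  assumes "\<Omega> \<in> sets lebesgue" "emeasure lebesgue \<Omega> < \<infinity>"
  shows "(\<lambda>x. a) \<in> L2 \<Omega>"
proof -
  interpret finite_measure "lebesgue_on \<Omega>" by (rule fm_lebesgue_on[OF assms])
  show ?thesis unfolding L2_def by simp
qed

lemma prox_pointwise:
  assumes \<Omega>: "\<Omega> \<in> sets lebesgue" and fin: "emeasure lebesgue \<Omega> < \<infinity>"
    and g0: "\<forall>t. 0 \<le> g t" and gz: "g 0 = 0" and lsc: "lsc_ereal g"
    and P: "prox_grad_iterates \<Omega> f df g L u"
    and dfL2: "\<And>v. v \<in> L2 \<Omega> \<Longrightarrow> df v \<in> L2 \<Omega>"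
    and gd: "g d \<noteq> \<infinity>"
  shows "AE x in lebesgue_on \<Omega>. g (u (Suc k) x) \<noteq> \<infinity> \<and>
      df (u k) x * (u (Suc k) x - u k x) + L / 2 * (u (Suc k) x - u k x)\<^sup>2 + real_of_ereal (g (u (Suc k) x))
      \<le> df (u k) x * (d - u k x) + L / 2 * (d - u k x)\<^sup>2 + real_of_ereal (g d)"
proof -
  define M where "M = lebesgue_on \<Omega>"
  interpret finite_measure M unfolding M_def by (rule fm_lebesgue_on[OF \<Omega> fin])
  define a where "a = u k"
  define b where "b = u (Suc k)"
  define c where "c = df a"
  have uL2: "u j \<in> L2 \<Omega>" for j using P unfolding prox_grad_iterates_def by blast
  have aL2: "a \<in> L2 \<Omega>" and bL2: "b \<in> L2 \<Omega>" and cL2: "c \<in> L2 \<Omega>"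
    unfolding a_def b_def c_def using uL2 dfL2 uL2 by auto
  have am[measurable]: "a \<in> borel_measurable M" and bm[measurable]: "b \<in> borel_measurable M"
    and cm[measurable]: "c \<in> borel_measurable M"
    using aL2 bL2 cL2 unfolding M_def by (auto simp: L2_def)
  have gm[measurable]: "g \<in> borel_measurable borel" by (rule lsc_meas[OF lsc])
  have gbm[measurable]: "(\<lambda>x. g (b x)) \<in> borel_measurable M" by measurable
  have Gb: "G_int \<Omega> g b \<noteq> \<infinity>" unfolding b_def by (rule iter_G_fin[OF g0 gz P])
  have gbAE: "AE x in M. g (b x) \<noteq> \<infinity>" and gbint: "integrable M (\<lambda>x. real_of_ereal (g (b x)))"
    using G_int_fin[OF g0 gbm[unfolded M_def] Gb] unfolding M_def by auto
  define gd' where "gd' = real_of_ereal (g d)"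
  define \<Psi> where "\<Psi> = (\<lambda>x t. c x * (t - a x) + L / 2 * (t - a x)\<^sup>2)"
  define A where "A = {x\<in>space M. g (b x) \<noteq> \<infinity> \<and> \<Psi> x d + gd' < \<Psi> x (b x) + real_of_ereal (g (b x))}"
  have Am[measurable]: "A \<in> sets M" unfolding A_def \<Psi>_def by measurable
  have A0: "emeasure M A = 0"
  proof (rule ccontr)
    assume Apos: "emeasure M A \<noteq> 0"
    define w where "w = (\<lambda>x. if x \<in> A then d else b x)"
    have wm[measurable]: "w \<in> borel_measurable M" unfolding w_def by measurable
    have wL2: "w \<in> L2 \<Omega>"
    proof -
      have "integrable M (\<lambda>x. (w x)\<^sup>2)"
      proof (rule Bochner_Integration.integrable_bound)
        have "integrable M (\<lambda>x. (b x)\<^sup>2)" using bL2 unfolding M_def by (auto simp: L2_def)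
        then show "integrable M (\<lambda>x. (b x)\<^sup>2 + d\<^sup>2)" by auto
        show "(\<lambda>x. (w x)\<^sup>2) \<in> borel_measurable M" by measurable
        show "AE x in M. norm ((w x)\<^sup>2) \<le> norm ((b x)\<^sup>2 + d\<^sup>2)" by (rule AE_I2) (auto simp: w_def)
      qed
      then show ?thesis using wm unfolding M_def L2_def by auto
    qed
    have gwm[measurable]: "(\<lambda>x. g (w x)) \<in> borel_measurable M" by measurable
    have gwAE: "AE x in M. g (w x) \<noteq> \<infinity>" using gbAE by eventually_elim (auto simp: w_def gd)
    have gwint: "integrable M (\<lambda>x. real_of_ereal (g (w x)))"
    proof (rule Bochner_Integration.integrable_bound)
      show "integrable M (\<lambda>x. real_of_ereal (g (b x)) + gd')" using gbint by auto
      show "(\<lambda>x. real_of_ereal (g (w x))) \<in> borel_measurable M" by measurable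
      show "AE x in M. norm (real_of_ereal (g (w x))) \<le> norm (real_of_ereal (g (b x)) + gd')"
      proof (rule AE_I2)
        fix x
        have "0 \<le> real_of_ereal (g (b x))" "0 \<le> gd'" "0 \<le> real_of_ereal (g (w x))"
          unfolding gd'_def using g0 by (auto simp: real_of_ereal_pos)
        moreover have "\<bar>g t\<bar> = g t" for t using g0 by simp
        ultimately show "norm (real_of_ereal (g (w x))) \<le> norm (real_of_ereal (g (b x)) + gd')"
          by (auto simp: w_def gd'_def)
      qed
    qed
    have Gbeq: "G_int \<Omega> g b = ereal (\<integral>x. real_of_ereal (g (b x)) \<partial>M)"
      using G_int_real[OF g0 gbm[unfolded M_def] gbAE[unfolded M_def] gbint[unfolded M_def]] unfolding M_def .
    have Gweq: "G_int \<Omega> g w = ereal (\<integral>x. real_of_ereal (g (w x)) \<partial>M)"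
      using G_int_real[OF g0 gwm[unfolded M_def] gwAE[unfolded M_def] gwint[unfolded M_def]] unfolding M_def .
    have obj: "l2_inner \<Omega> c (\<lambda>x. v x - a x) + L / 2 * (l2_norm \<Omega> (\<lambda>x. v x - a x))\<^sup>2
        + (\<integral>x. real_of_ereal (g (v x)) \<partial>M) = (\<integral>x. \<Psi> x (v x) + real_of_ereal (g (v x)) \<partial>M)"
      and objint: "integrable M (\<lambda>x. \<Psi> x (v x) + real_of_ereal (g (v x)))"
      if vL2: "v \<in> L2 \<Omega>" and vint: "integrable M (\<lambda>x. real_of_ereal (g (v x)))" for v
    proof -
      have h: "(\<lambda>x. v x - a x) \<in> L2 \<Omega>" using vL2 aL2 by (rule L2_diff)
      have i1: "integrable M (\<lambda>x. c x * (v x - a x))" using L2_mult_int[OF cL2 h] unfolding M_def .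
      have i2: "integrable M (\<lambda>x. (v x - a x)\<^sup>2)" using h unfolding M_def L2_def by auto
      show "integrable M (\<lambda>x. \<Psi> x (v x) + real_of_ereal (g (v x)))"
        unfolding \<Psi>_def using i1 i2 vint by auto
      show "l2_inner \<Omega> c (\<lambda>x. v x - a x) + L / 2 * (l2_norm \<Omega> (\<lambda>x. v x - a x))\<^sup>2
        + (\<integral>x. real_of_ereal (g (v x)) \<partial>M) = (\<integral>x. \<Psi> x (v x) + real_of_ereal (g (v x)) \<partial>M)"
        unfolding \<Psi>_def l2_inner_def l2_norm_sq M_def[symmetric] using i1 i2 vint by simp
    qed
    have "ereal (f a + l2_inner \<Omega> c (\<lambda>x. b x - a x) + L / 2 * (l2_norm \<Omega> (\<lambda>x. b x - a x))\<^sup>2) + G_int \<Omega> g b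
        \<le> ereal (f a + l2_inner \<Omega> c (\<lambda>x. w x - a x) + L / 2 * (l2_norm \<Omega> (\<lambda>x. w x - a x))\<^sup>2) + G_int \<Omega> g w"
      unfolding a_def b_def c_def by (rule prox_ineq[OF P wL2[unfolded a_def b_def c_def]])
    then have "l2_inner \<Omega> c (\<lambda>x. b x - a x) + L / 2 * (l2_norm \<Omega> (\<lambda>x. b x - a x))\<^sup>2 + (\<integral>x. real_of_ereal (g (b x)) \<partial>M)
        \<le> l2_inner \<Omega> c (\<lambda>x. w x - a x) + L / 2 * (l2_norm \<Omega> (\<lambda>x. w x - a x))\<^sup>2 + (\<integral>x. real_of_ereal (g (w x)) \<partial>M)"
      unfolding Gbeq Gweq by simp
    then have le: "(\<integral>x. \<Psi> x (b x) + real_of_ereal (g (b x)) \<partial>M) \<le> (\<integral>x. \<Psi> x (w x) + real_of_ereal (g (w x)) \<partial>M)"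
      unfolding obj[OF bL2 gbint] obj[OF wL2 gwint] .
    define \<delta> where "\<delta> = (\<lambda>x. (\<Psi> x (b x) + real_of_ereal (g (b x))) - (\<Psi> x (w x) + real_of_ereal (g (w x))))"
    have \<delta>int: "integrable M \<delta>" unfolding \<delta>_def using objint[OF bL2 gbint] objint[OF wL2 gwint] by auto
    have \<delta>0: "0 \<le> \<delta> x" for x
      by (cases "x \<in> A") (auto simp: \<delta>_def w_def A_def gd'_def)
    have "(\<integral>x. \<delta> x \<partial>M) = (\<integral>x. \<Psi> x (b x) + real_of_ereal (g (b x)) \<partial>M) - (\<integral>x. \<Psi> x (w x) + real_of_ereal (g (w x)) \<partial>M)"
      unfolding \<delta>_def using objint[OF bL2 gbint] objint[OF wL2 gwint] by simp
    then have "(\<integral>x. \<delta> x \<partial>M) \<le> 0" using le by simp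
    moreover have "0 \<le> (\<integral>x. \<delta> x \<partial>M)" using \<delta>0 by (simp add: integral_nonneg_AE)
    ultimately have "(\<integral>x. \<delta> x \<partial>M) = 0" by simp
    then have "AE x in M. \<delta> x = 0" using integral_nonneg_eq_0_iff_AE[OF \<delta>int] \<delta>0 by simp
    then have "AE x in M. x \<notin> A"
      by eventually_elim (auto simp: \<delta>_def w_def A_def gd'_def)
    then have "emeasure M A = 0"
    proof -
      have "{x \<in> space M. \<not> x \<notin> A} = A" using sets.sets_into_space[OF Am] by auto
      with AE_iff_measurable[OF Am this] \<open>AE x in M. x \<notin> A\<close> show ?thesis by simp
    qed
    then show False using Apos by simp
  qed
  have "AE x in M. x \<notin> A" using A0 Am by (intro AE_not_in) auto
  then have "AE x in M. g (b x) \<noteq> \<infinity> \<and> \<Psi> x (b x) + real_of_ereal (g (b x)) \<le> \<Psi> x d + gd'"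
    using gbAE AE_space by eventually_elim (auto simp: A_def)
  then show ?thesis unfolding M_def \<Psi>_def a_def b_def c_def gd'_def by simp
qed



lemma weak_cluster:
  assumes \<Omega>: "\<Omega> \<in> sets lebesgue" and fin: "emeasure lebesgue \<Omega> < \<infinity>"
    and us: "ustar \<in> L2 \<Omega>" and wL2: "\<And>j. w j \<in> L2 \<Omega>" and wc: "weak_conv \<Omega> w ustar"
    and e: "e > 0"
  shows "AE x in lebesgue_on \<Omega>. \<exists>j\<ge>N. s * w j x > s * ustar x - e"
proof -
  define M where "M = lebesgue_on \<Omega>"
  interpret finite_measure M unfolding M_def by (rule fm_lebesgue_on[OF \<Omega> fin])
  have wm[measurable]: "w j \<in> borel_measurable M" for j using wL2[of j] unfolding M_def L2_def by auto
  have um[measurable]: "ustar \<in> borel_measurable M" using us unfolding M_def L2_def by auto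
  define A where "A = {x\<in>space M. \<forall>j\<ge>N. s * w j x \<le> s * ustar x - e}"
  have Am[measurable]: "A \<in> sets M" unfolding A_def by measurable
  define v where "v = (\<lambda>x. s * indicator A x :: real)"
  have vm[measurable]: "v \<in> borel_measurable M" unfolding v_def by measurable
  have vL2: "v \<in> L2 \<Omega>"
  proof -
    have "integrable M (\<lambda>x. (v x)\<^sup>2)"
    proof (rule Bochner_Integration.integrable_bound)
      show "integrable M (\<lambda>x. s\<^sup>2)" by simp
      show "(\<lambda>x. (v x)\<^sup>2) \<in> borel_measurable M" by measurable
      show "AE x in M. norm ((v x)\<^sup>2) \<le> norm (s\<^sup>2)" by (rule AE_I2) (auto simp: v_def indicator_def)
    qed
    then show ?thesis using vm unfolding M_def L2_def by auto
  qed
  have lim: "(\<lambda>j. l2_inner \<Omega> (w j) v) \<longlonglongrightarrow> l2_inner \<Omega> ustar v"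
    using wc vL2 unfolding weak_conv_def by blast
  have ui: "integrable M (\<lambda>x. ustar x * v x)" using L2_mult_int[OF us vL2] unfolding M_def .
  have Ai: "integrable M (\<lambda>x. indicator A x :: real)" using Am by (simp add: emeasure_eq_measure)
  have bound: "l2_inner \<Omega> (w j) v \<le> l2_inner \<Omega> ustar v - e * measure M A" if "j \<ge> N" for j
  proof -
    have "l2_inner \<Omega> (w j) v = (\<integral>x. w j x * v x \<partial>M)" unfolding l2_inner_def M_def ..
    also have "\<dots> \<le> (\<integral>x. ustar x * v x - e * indicator A x \<partial>M)"
    proof (rule integral_mono)
      show "integrable M (\<lambda>x. w j x * v x)" using L2_mult_int[OF wL2 vL2] unfolding M_def .
      show "integrable M (\<lambda>x. ustar x * v x - e * indicator A x)" using ui Ai by auto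
      fix x assume x: "x \<in> space M"
      show "w j x * v x \<le> ustar x * v x - e * indicator A x"
        using x that by (cases "x \<in> A") (auto simp: v_def A_def algebra_simps)
    qed
    also have "\<dots> = l2_inner \<Omega> ustar v - e * measure M A"
      using ui Ai Am sets.sets_into_space[OF Am] unfolding l2_inner_def M_def[symmetric]
      by (simp add: Int_absorb2)
    finally show ?thesis .
  qed
  have "l2_inner \<Omega> ustar v \<le> l2_inner \<Omega> ustar v - e * measure M A"
    using lim bound by (intro LIMSEQ_le_const2) auto
  then have "measure M A \<le> 0" using e by (simp add: mult_le_0_iff)
  then have "measure M A = 0" using measure_nonneg[of M A] by linarith
  then have "emeasure M A = 0" by (simp add: emeasure_eq_measure)
  then have "AE x in M. x \<notin> A" using Am by (intro AE_not_in) auto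
  then have "AE x in M. \<exists>j\<ge>N. s * w j x > s * ustar x - e"
    using AE_space by eventually_elim (auto simp: A_def not_le)
  then show ?thesis unfolding M_def .
qed



lemma cluster_point:
  fixes a :: "nat \<Rightarrow> real"
  assumes step: "(\<lambda>k. a (Suc k) - a k) \<longlonglongrightarrow> 0"
    and up: "\<And>m N. \<exists>k\<ge>N. p - inverse (real (Suc m)) < a k"
    and dn: "\<And>m N. \<exists>k\<ge>N. a k < p + inverse (real (Suc m))"
    and e: "e > 0"
  shows "\<exists>k\<ge>N. \<bar>a k - p\<bar> < e"
proof -
  obtain N1 where N1: "\<And>k. k \<ge> N1 \<Longrightarrow> \<bar>a (Suc k) - a k\<bar> < e"
    using step e unfolding lim_sequentially dist_real_def by fastforce
  obtain m where m: "inverse (real (Suc m)) < e" using e reals_Archimedean by blast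
  obtain k1 where k1: "k1 \<ge> max N N1" "a k1 < p + inverse (real (Suc m))" using dn by blast
  show ?thesis
  proof (cases "a k1 > p - e")
    case True
    then show ?thesis using k1 m by (intro exI[of _ k1]) auto
  next
    case False
    obtain k2 where k2: "k2 \<ge> k1" "p - inverse (real (Suc m)) < a k2" using up by blast
    define S where "S = {k. k1 \<le> k \<and> a k > p - e}"
    have "k2 \<in> S" unfolding S_def using k2 m by auto
    define k0 where "k0 = (LEAST k. k \<in> S)"
    have k0S: "k0 \<in> S" unfolding k0_def using \<open>k2 \<in> S\<close> by (rule LeastI)
    have "k0 \<noteq> k1" using k0S False unfolding S_def by auto
    then have k0gt: "k0 > k1" using k0S unfolding S_def by auto
    then obtain j where j: "k0 = Suc j" "j \<ge> k1" by (cases k0) auto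
    have "j \<notin> S"
    proof
      assume "j \<in> S"
      then have "k0 \<le> j" unfolding k0_def by (rule Least_le)
      then show False using j by simp
    qed
    then have aj: "a j \<le> p - e" using j unfolding S_def by auto
    have "\<bar>a (Suc j) - a j\<bar> < e" using N1 j k1 by auto
    then have "a k0 < p" using aj j by auto
    moreover have "a k0 > p - e" using k0S unfolding S_def by auto
    ultimately show ?thesis using k0gt k1 by (intro exI[of _ k0]) auto
  qed
qed

lemma pointwise_limit:
  fixes a c :: "nat \<Rightarrow> real"
  assumes lsc: "lsc_ereal g" and g0: "\<forall>t. 0 \<le> g t"
    and step: "(\<lambda>k. a (Suc k) - a k) \<longlonglongrightarrow> 0"
    and cc: "c \<longlonglongrightarrow> c0"
    and up: "\<And>m N. \<exists>k\<ge>N. p - inverse (real (Suc m)) < a k"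
    and dn: "\<And>m N. \<exists>k\<ge>N. a k < p + inverse (real (Suc m))"
    and fin: "\<And>k. g (a (Suc k)) \<noteq> \<infinity>"
    and ineq: "\<And>k. c k * (a (Suc k) - a k) + L / 2 * (a (Suc k) - a k)\<^sup>2 + real_of_ereal (g (a (Suc k)))
         \<le> c k * (d - a k) + L / 2 * (d - a k)\<^sup>2 + gd"
  shows "ereal (c0 * p) + g p \<le> ereal (c0 * d + L / 2 * (d - p)\<^sup>2 + gd)"
proof -
  define P where "P = (\<lambda>n k. \<bar>a k - p\<bar> < inverse (real (Suc n)))"
  have ex: "\<exists>k\<ge>N. P n k" for n N
    unfolding P_def by (rule cluster_point[OF step up dn]) auto
  obtain \<sigma> where \<sigma>: "\<forall>n. P n (\<sigma> n) \<and> \<sigma> n < \<sigma> (Suc n)"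
  proof -
    have "\<exists>f. \<forall>n. P n (f n) \<and> f n < f (Suc n)"
    proof (rule dependent_nat_choice)
      show "\<exists>x. P 0 x" using ex[of 0 0] by blast
      fix x n assume "P n x"
      show "\<exists>y. P (Suc n) y \<and> x < y" using ex[of "Suc x" "Suc n"] by auto
    qed
    then show ?thesis using that by blast
  qed
  have sm: "strict_mono \<sigma>" using \<sigma> by (simp add: strict_mono_Suc_iff)
  have a\<sigma>: "(\<lambda>i. a (\<sigma> i)) \<longlonglongrightarrow> p"
  proof (rule tendsto_sandwich[of "\<lambda>i. p - inverse (real (Suc i))" _ _ "\<lambda>i. p + inverse (real (Suc i))"])
    show "\<forall>\<^sub>F i in sequentially. p - inverse (real (Suc i)) \<le> a (\<sigma> i)"
      using \<sigma> unfolding P_def by (intro always_eventually allI) (smt (verit))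
    show "\<forall>\<^sub>F i in sequentially. a (\<sigma> i) \<le> p + inverse (real (Suc i))"
      using \<sigma> unfolding P_def by (intro always_eventually allI) (smt (verit))
    show "(\<lambda>i. p - inverse (real (Suc i))) \<longlonglongrightarrow> p"
      using tendsto_diff[OF tendsto_const LIMSEQ_inverse_real_of_nat, of p] by simp
    show "(\<lambda>i. p + inverse (real (Suc i))) \<longlonglongrightarrow> p"
      using tendsto_add[OF tendsto_const LIMSEQ_inverse_real_of_nat, of p] by simp
  qed
  have st\<sigma>: "(\<lambda>i. a (Suc (\<sigma> i)) - a (\<sigma> i)) \<longlonglongrightarrow> 0"
    using LIMSEQ_subseq_LIMSEQ[OF step sm] by (simp add: comp_def)
  have c\<sigma>: "(\<lambda>i. c (\<sigma> i)) \<longlonglongrightarrow> c0"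
    using LIMSEQ_subseq_LIMSEQ[OF cc sm] by (simp add: comp_def)
  have b\<sigma>: "(\<lambda>i. a (Suc (\<sigma> i))) \<longlonglongrightarrow> p"
    using tendsto_add[OF a\<sigma> st\<sigma>] by simp
  define H where "H = (\<lambda>k. c k * (d - a k) + L / 2 * (d - a k)\<^sup>2 + gd
      - (c k * (a (Suc k) - a k) + L / 2 * (a (Suc k) - a k)\<^sup>2))"
  have H\<sigma>: "(\<lambda>i. H (\<sigma> i)) \<longlonglongrightarrow> c0 * (d - p) + L / 2 * (d - p)\<^sup>2 + gd - (c0 * 0 + L / 2 * 0\<^sup>2)"
    unfolding H_def by (intro tendsto_intros c\<sigma> a\<sigma> st\<sigma>)
  have Hle: "g (a (Suc k)) \<le> ereal (H k)" for k
  proof -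
    have "g (a (Suc k)) = ereal (real_of_ereal (g (a (Suc k))))"
      using fin[of k] g0 by (cases "g (a (Suc k))") auto
    also have "\<dots> \<le> ereal (H k)" using ineq[of k] unfolding H_def by simp
    finally show ?thesis .
  qed
  show ?thesis
  proof (rule ccontr)
    assume "\<not> ?thesis"
    then have lt: "ereal (c0 * d + L / 2 * (d - p)\<^sup>2 + gd) < ereal (c0 * p) + g p" by simp
    define R where "R = c0 * (d - p) + L / 2 * (d - p)\<^sup>2 + gd"
    have "ereal R < g p"
    proof (cases "g p")
      case (real r)
      then show ?thesis using lt unfolding R_def by (simp add: algebra_simps)
    next
      case PInf then show ?thesis by simp
    next
      case MInf then show ?thesis using g0[rule_format, of p] by simp
    qed
    then obtain y where y: "ereal R < ereal y" "ereal y < g p"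
      using ereal_dense2 by blast
    have ev1: "eventually (\<lambda>i. y < g (a (Suc (\<sigma> i)))) sequentially"
      by (rule lsc_seq[OF lsc b\<sigma> y(2)])
    have "(\<lambda>i. H (\<sigma> i)) \<longlonglongrightarrow> R" using H\<sigma> unfolding R_def by simp
    then have ev2: "eventually (\<lambda>i. H (\<sigma> i) < y) sequentially"
      using y(1) by (intro order_tendstoD(2)) auto
    from ev1 ev2 have "eventually (\<lambda>i. False) sequentially"
    proof eventually_elim
      case (elim i)
      have "ereal y < ereal (H (\<sigma> i))" using elim(1) Hle[of "\<sigma> i"] by (rule order.strict_trans2)
      then show False using elim(2) by simp
    qed
    then show False by simp
  qed
qed



lemma dense_dom:
  fixes g :: "real \<Rightarrow> ereal"
  assumes g00: "g 0 = 0"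
  obtains D where "countable D" "\<forall>d\<in>D. g d \<noteq> \<infinity>" "D \<noteq> {}"
    "\<And>\<phi> X v. continuous_on UNIV \<phi> \<Longrightarrow> (\<forall>d\<in>D. X \<le> \<phi> d + real_of_ereal (g d)) \<Longrightarrow> g v \<noteq> \<infinity>
        \<Longrightarrow> X \<le> \<phi> v + real_of_ereal (g v)"
proof -
  define S where "S = {(t, real_of_ereal (g t)) | t. g t \<noteq> \<infinity>}"
  obtain T where T: "countable T" "T \<subseteq> S" "S \<subseteq> closure T" by (rule separable[of S])
  define D where "D = fst ` T"
  have TD: "\<And>z. z \<in> T \<Longrightarrow> fst z \<in> D \<and> snd z = real_of_ereal (g (fst z)) \<and> g (fst z) \<noteq> \<infinity>"
    using T(2) unfolding D_def S_def by auto
  show ?thesis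
  proof
    show "countable D" unfolding D_def using T(1) by simp
    show "\<forall>d\<in>D. g d \<noteq> \<infinity>" unfolding D_def using TD by auto
    have "(0, real_of_ereal (g 0)) \<in> S" unfolding S_def using g00 by auto
    then have "T \<noteq> {}" using T(3) by auto
    then show "D \<noteq> {}" unfolding D_def by simp
    fix \<phi> X v
    assume c: "continuous_on UNIV \<phi>" and H: "\<forall>d\<in>D. X \<le> \<phi> d + real_of_ereal (g d)" and gv: "g v \<noteq> \<infinity>"
    define C where "C = {z :: real \<times> real. X \<le> \<phi> (fst z) + snd z}"
    have "closed C" unfolding C_def
      by (intro closed_Collect_le continuous_intros continuous_on_compose2[OF c]) auto
    moreover have "T \<subseteq> C"
    proof
      fix z assume "z \<in> T"
      with TD[OF this] H show "z \<in> C" unfolding C_def by (cases z) auto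
    qed
    ultimately have "closure T \<subseteq> C" by (rule closure_minimal[rotated])
    moreover have "(v, real_of_ereal (g v)) \<in> S" unfolding S_def using gv by auto
    ultimately show "X \<le> \<phi> v + real_of_ereal (g v)" using T(3) unfolding C_def by auto
  qed
qed



theorem theorem4p12:
  fixes \<Omega> :: "'a::euclidean_space set"
    and f :: "('a \<Rightarrow> real) \<Rightarrow> real"
    and df :: "('a \<Rightarrow> real) \<Rightarrow> ('a \<Rightarrow> real)"
    and g :: "real \<Rightarrow> ereal"
    and Lf L :: real
    and u :: "nat \<Rightarrow> 'a \<Rightarrow> real"
    and ustar :: "'a \<Rightarrow> real"
  assumes "\<Omega> \<in> sets lebesgue"
    and "emeasure lebesgue \<Omega> < \<infinity>"
    and "assumption_A \<Omega> f df Lf"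
    and "assumption_B g"
    and "L > Lf"
    and "prox_grad_iterates \<Omega> f df g L u"
    and "ustar \<in> L2 \<Omega>"
    and "\<exists>r. strict_mono r \<and> weak_conv \<Omega> (u \<circ> r) ustar"
    and "AE x in lebesgue_on \<Omega>. (\<lambda>k. df (u k) x) \<longlonglongrightarrow> df ustar x"
  shows "AE x in lebesgue_on \<Omega>. ustar x \<in> G_L g L (- df ustar x)"
proof -
  note \<Omega> = assms(1) and fin = assms(2) and A = assms(3) and B = assms(4) and LL = assms(5)
    and P = assms(6) and us = assms(7) and gradAE = assms(9)
  obtain r where r: "strict_mono r" "weak_conv \<Omega> (u \<circ> r) ustar" using assms(8) by blast
  have fg: "frechet_gradient \<Omega> f df" using A unfolding assumption_A_def by auto
  have dfL2: "\<And>v. v \<in> L2 \<Omega> \<Longrightarrow> df v \<in> L2 \<Omega>" using fg unfolding frechet_gradient_def by auto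
  have lsc: "lsc_ereal g" and g0: "\<forall>t. 0 \<le> g t" and gz: "g 0 = 0"
    using B unfolding assumption_B_def by auto
  have uL2: "u k \<in> L2 \<Omega>" for k using P unfolding prox_grad_iterates_def by blast
  have stepAE: "AE x in lebesgue_on \<Omega>. (\<lambda>k. u (Suc k) x - u k x) \<longlonglongrightarrow> 0"
    using AE_steps_zero[of "\<lambda>k x. u (Suc k) x - u k x" \<Omega>] iter_summable[OF A g0 gz LL P]
      L2_diff[OF uL2 uL2] by simp
  \<comment> \<open>countable dense subset of the domain\<close>
  obtain D where D: "countable D" "\<forall>d\<in>D. g d \<noteq> \<infinity>" "D \<noteq> {}"
    and dens: "\<And>\<phi> X v. continuous_on UNIV \<phi> \<Longrightarrow> (\<forall>d\<in>D. X \<le> \<phi> d + real_of_ereal (g d)) \<Longrightarrow> g v \<noteq> \<infinity>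
        \<Longrightarrow> X \<le> \<phi> v + real_of_ereal (g v)"
    using dense_dom[of g, OF gz] by blast
  have proxAE: "AE x in lebesgue_on \<Omega>. \<forall>k. \<forall>d\<in>D. g (u (Suc k) x) \<noteq> \<infinity> \<and>
      df (u k) x * (u (Suc k) x - u k x) + L / 2 * (u (Suc k) x - u k x)\<^sup>2 + real_of_ereal (g (u (Suc k) x))
      \<le> df (u k) x * (d - u k x) + L / 2 * (d - u k x)\<^sup>2 + real_of_ereal (g d)"
    unfolding AE_all_countable
  proof
    fix k
    show "AE x in lebesgue_on \<Omega>. \<forall>d\<in>D. g (u (Suc k) x) \<noteq> \<infinity> \<and>
      df (u k) x * (u (Suc k) x - u k x) + L / 2 * (u (Suc k) x - u k x)\<^sup>2 + real_of_ereal (g (u (Suc k) x))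
      \<le> df (u k) x * (d - u k x) + L / 2 * (d - u k x)\<^sup>2 + real_of_ereal (g d)"
    proof (subst AE_ball_countable[OF D(1)], intro ballI)
      fix d assume d: "d \<in> D"
      show "AE x in lebesgue_on \<Omega>. g (u (Suc k) x) \<noteq> \<infinity> \<and>
        df (u k) x * (u (Suc k) x - u k x) + L / 2 * (u (Suc k) x - u k x)\<^sup>2 + real_of_ereal (g (u (Suc k) x))
        \<le> df (u k) x * (d - u k x) + L / 2 * (d - u k x)\<^sup>2 + real_of_ereal (g d)"
        by (rule prox_pointwise[OF \<Omega> fin g0 gz lsc P dfL2 bspec[OF D(2) d]])
    qed
  qed
  have wL2: "(u \<circ> r) j \<in> L2 \<Omega>" for j using uL2 by simp
  have clAE: "AE x in lebesgue_on \<Omega>. \<forall>m N. (\<exists>j\<ge>N. 1 * (u \<circ> r) j x > 1 * ustar x - inverse (real (Suc m)))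
      \<and> (\<exists>j\<ge>N. (-1) * (u \<circ> r) j x > (-1) * ustar x - inverse (real (Suc m)))"
    unfolding AE_all_countable
    by (intro allI AE_conjI weak_cluster[OF \<Omega> fin us wL2 r(2)]) auto
  show ?thesis
    using stepAE proxAE clAE gradAE
  proof eventually_elim
    case (elim x)
    define a where "a = (\<lambda>k. u k x)"
    define c where "c = (\<lambda>k. df (u k) x)"
    define c0 where "c0 = df ustar x"
    define p where "p = ustar x"
    have up: "\<exists>k\<ge>N. p - inverse (real (Suc m)) < a k" for m N
    proof -
      obtain j where "j \<ge> N" "1 * (u \<circ> r) j x > 1 * ustar x - inverse (real (Suc m))" using elim(3) by blast
      then show ?thesis unfolding a_def p_def using seq_suble[OF r(1), of j]
        by (intro exI[of _ "r j"]) auto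
    qed
    have dn: "\<exists>k\<ge>N. a k < p + inverse (real (Suc m))" for m N
    proof -
      obtain j where "j \<ge> N" "(-1) * (u \<circ> r) j x > (-1) * ustar x - inverse (real (Suc m))" using elim(3) by blast
      then show ?thesis unfolding a_def p_def using seq_suble[OF r(1), of j]
        by (intro exI[of _ "r j"]) auto
    qed
    have lim: "ereal (c0 * p) + g p \<le> ereal (c0 * d + L / 2 * (d - p)\<^sup>2 + real_of_ereal (g d))" if d: "d \<in> D" for d
    proof (rule pointwise_limit[OF lsc g0])
      show "(\<lambda>k. a (Suc k) - a k) \<longlonglongrightarrow> 0" using elim(1) unfolding a_def .
      show "c \<longlonglongrightarrow> c0" using elim(4) unfolding c_def c0_def .
      show "\<exists>k\<ge>N. p - inverse (real (Suc m)) < a k" for m N by (rule up)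
      show "\<exists>k\<ge>N. a k < p + inverse (real (Suc m))" for m N by (rule dn)
      show "g (a (Suc k)) \<noteq> \<infinity>" for k using elim(2) d unfolding a_def by blast
      show "c k * (a (Suc k) - a k) + L / 2 * (a (Suc k) - a k)\<^sup>2 + real_of_ereal (g (a (Suc k)))
         \<le> c k * (d - a k) + L / 2 * (d - a k)\<^sup>2 + real_of_ereal (g d)" for k
        using elim(2) d unfolding a_def c_def by blast
    qed
    obtain d0 where d0: "d0 \<in> D" using D(3) by blast
    have gp: "g p \<noteq> \<infinity>"
    proof
      assume "g p = \<infinity>"
      then show False using lim[OF d0] by simp
    qed
    have gpr: "g p = ereal (real_of_ereal (g p))" using gp g0 by (cases "g p") auto
    define X where "X = c0 * p + real_of_ereal (g p)"
    define \<phi> where "\<phi> = (\<lambda>t. c0 * t + L / 2 * (t - p)\<^sup>2)"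
    have phic: "continuous_on UNIV \<phi>" unfolding \<phi>_def by (intro continuous_intros)
    have Xd: "\<forall>d\<in>D. X \<le> \<phi> d + real_of_ereal (g d)"
    proof
      fix d assume "d \<in> D"
      from lim[OF this] show "X \<le> \<phi> d + real_of_ereal (g d)"
        unfolding X_def \<phi>_def by (subst (asm) gpr) simp
    qed
    show "ustar x \<in> G_L g L (- df ustar x)"
      unfolding G_L_def
    proof (intro CollectI allI)
      fix v
      show "ereal (- (- df ustar x) * ustar x + L / 2 * (ustar x - ustar x)\<^sup>2) + g (ustar x)
          \<le> ereal (- (- df ustar x) * v + L / 2 * (v - ustar x)\<^sup>2) + g v"
      proof (cases "g v = \<infinity>")
        case True
        then show ?thesis by simp
      next
        case False
        have gvr: "g v = ereal (real_of_ereal (g v))" using False g0 by (cases "g v") auto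
        have "X \<le> \<phi> v + real_of_ereal (g v)" by (rule dens[OF phic Xd False])
        then show ?thesis unfolding X_def \<phi>_def c0_def p_def
          by (subst gvr, subst gpr[unfolded p_def]) simp
      qed
    qed
  qed
qed


end
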